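(* Let $\alpha\ge 1$. (i) The vector $(1,2,\dots,2)$ of length $\alpha$ is realized by the path $P_{2\alpha-1}$ on $2\alpha-1$ vertices, and (up to isomorphism) by no other graph. (ii) No vector of the form $(1,2,\dots,2,1)$ (with at least one entry 2) is realizable. (iii) The vector $(2,\dots,2)$ of length $\alpha$ is 0-realized by the path $P_{2\alpha}$ on $2\alpha$ vertices, and (up to isomorphism) by no other graph. (iv) No vector of the form $(2,\dots,2,1)$ (with at least one entry 2) is 0-realizable.
   Context: All graphs are finite, nonempty, and reflexive (every vertex has a loop). $N[v]$ is the closed neighborhood of $v$ (including $v$). For distinct $v,w$, $w$ strictly corners $v$ if $N[v]\subsetneq N[w]$; $v$ is then a strict corner. A vertex dominates a set if adjacent to all its vertices. Corner ranking: set $G^{(1)}=G$, $k=1$. If $G^{(k)}$ is a clique, give all its vertices rank $k$ and stop. Else if $G^{(k)}$ has no strict corners, give all its vertices rank $\infty$ and stop. Else give every strict corner of $G^{(k)}$ rank $k$, delete them to get $G^{(k+1)}$ (induced subgraph), increase $k$ and repeat. The corner rank of $G$ is the largest rank of a vertex; $X_k$ is the set of rank-$k$ vertices. A graph is cop-win (in the game of cops and robbers) iff its corner rank is finite. If $G$ has finite corner rank $\alpha\ge 2$, it is of type 1 if some (equivalently every) vertex of rank $\alpha$ dominates $V(G^{(\alpha-1)})$, and of type 0 otherwise. A vector is a finite list of positive integers. The rank cardinality vector of a graph of corner rank $\alpha$ is $(x_\alpha,\dots,x_1)$ with $x_k=|X_k|$. A vector is realizable if it is the rank cardinality vector of some cop-win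 graph, and 0-realizable if it is the rank cardinality vector of some cop-win graph of type 0. *)

theory Defs
  imports Main
begin

text \<open>A (finite, nonempty, reflexive) graph is given by a vertex set V and a
symmetric adjacency relation E (only its restriction to V matters).\<close>

definition graph :: "'a set \<Rightarrow> ('a \<Rightarrow> 'a \<Rightarrow> bool) \<Rightarrow> bool" where
  "graph V E \<longleftrightarrow> finite V \<and> V \<noteq> {} \<and> (\<forall>v\<in>V. E v v) \<and>
     (\<forall>u\<in>V. \<forall>v\<in>V. E u v \<longleftrightarrow> E v u)"

definition cnbhd :: "('a \<Rightarrow> 'a \<Rightarrow> bool) \<Rightarrow> 'a set \<Rightarrow> 'a \<Rightarrow> 'a set" where
  "cnbhd E S v = {w \<in> S. E v w}"

definition is_clique :: "('a \<Rightarrow> 'a \<Rightarrow> bool) \<Rightarrow> 'a set \<Rightarrow> bool" where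
  "is_clique E S \<longleftrightarrow> (\<forall>u\<in>S. \<forall>v\<in>S. E u v)"

definition strict_corners :: "('a \<Rightarrow> 'a \<Rightarrow> bool) \<Rightarrow> 'a set \<Rightarrow> 'a set" where
  "strict_corners E S = {v \<in> S. \<exists>w\<in>S. w \<noteq> v \<and> cnbhd E S v \<subset> cnbhd E S w}"

text \<open>Vertex set of G^(k), for k \<ge> 1 (index 0 is a dummy equal to V).\<close>
fun layer :: "('a \<Rightarrow> 'a \<Rightarrow> bool) \<Rightarrow> 'a set \<Rightarrow> nat \<Rightarrow> 'a set" where
  "layer E V 0 = V"
| "layer E V (Suc 0) = V"
| "layer E V (Suc (Suc k)) = layer E V (Suc k) - strict_corners E (layer E V (Suc k))"

text \<open>Finite corner rank (equivalently cop-win): some G^(k) is a clique.\<close>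
definition cop_win :: "'a set \<Rightarrow> ('a \<Rightarrow> 'a \<Rightarrow> bool) \<Rightarrow> bool" where
  "cop_win V E \<longleftrightarrow> (\<exists>k\<ge>1. is_clique E (layer E V k))"

definition corner_rank :: "'a set \<Rightarrow> ('a \<Rightarrow> 'a \<Rightarrow> bool) \<Rightarrow> nat" where
  "corner_rank V E = (LEAST k. k \<ge> 1 \<and> is_clique E (layer E V k))"

text \<open>X_k: the set of vertices of rank k (k \<ge> 1).\<close>
definition rank_set :: "'a set \<Rightarrow> ('a \<Rightarrow> 'a \<Rightarrow> bool) \<Rightarrow> nat \<Rightarrow> 'a set" where
  "rank_set V E k =
     (if k \<ge> 1 \<and> (\<forall>j\<in>{1..<k}. \<not> is_clique E (layer E V j)) then
        (if is_clique E (layer E V k) then layer E V k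
         else strict_corners E (layer E V k))
      else {})"

text \<open>Rank cardinality vector (x_alpha, ..., x_1).\<close>
definition rcv :: "'a set \<Rightarrow> ('a \<Rightarrow> 'a \<Rightarrow> bool) \<Rightarrow> nat list" where
  "rcv V E = map (\<lambda>k. card (rank_set V E k)) (rev [1..<corner_rank V E + 1])"

definition dominates :: "('a \<Rightarrow> 'a \<Rightarrow> bool) \<Rightarrow> 'a \<Rightarrow> 'a set \<Rightarrow> bool" where
  "dominates E v S \<longleftrightarrow> (\<forall>w\<in>S. E v w)"

text \<open>Type 1: corner rank alpha \<ge> 2 and some rank-alpha vertex dominates G^(alpha-1).
Type 0: cop-win and not type 1 (cliques, of corner rank 1, count as type 0).\<close>
definition type1 :: "'a set \<Rightarrow> ('a \<Rightarrow> 'a \<Rightarrow> bool) \<Rightarrow> bool" where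
  "type1 V E \<longleftrightarrow> cop_win V E \<and> corner_rank V E \<ge> 2 \<and>
     (\<exists>v\<in>rank_set V E (corner_rank V E).
        dominates E v (layer E V (corner_rank V E - 1)))"

definition type0 :: "'a set \<Rightarrow> ('a \<Rightarrow> 'a \<Rightarrow> bool) \<Rightarrow> bool" where
  "type0 V E \<longleftrightarrow> cop_win V E \<and> \<not> type1 V E"

definition realizable :: "nat list \<Rightarrow> bool" where
  "realizable xs \<longleftrightarrow> (\<exists>(V::nat set) E. graph V E \<and> cop_win V E \<and> rcv V E = xs)"

definition zero_realizable :: "nat list \<Rightarrow> bool" where
  "zero_realizable xs \<longleftrightarrow> (\<exists>(V::nat set) E. graph V E \<and> type0 V E \<and> rcv V E = xs)"

definition path_V :: "nat \<Rightarrow> nat set" where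
  "path_V n = {0..<n}"

definition path_E :: "nat \<Rightarrow> nat \<Rightarrow> bool" where
  "path_E i j \<longleftrightarrow> i \<le> j + 1 \<and> j \<le> i + 1"

definition graph_iso :: "'a set \<Rightarrow> ('a \<Rightarrow> 'a \<Rightarrow> bool) \<Rightarrow> 'b set \<Rightarrow> ('b \<Rightarrow> 'b \<Rightarrow> bool) \<Rightarrow> bool" where
  "graph_iso V E W F \<longleftrightarrow> (\<exists>f. bij_betw f V W \<and> (\<forall>u\<in>V. \<forall>v\<in>V. E u v \<longleftrightarrow> F (f u) (f v)))"

end

theory Submission
  imports Defs
begin

lemma layer_shift:
  "layer E (layer E V (Suc (Suc 0))) (Suc k) = layer E V (Suc (Suc k))"
  by (induction k) auto

lemma layer_shift':
  "k \<ge> 1 \<Longrightarrow> layer E (layer E V (Suc (Suc 0))) k = layer E V (Suc k)"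
  using layer_shift[of E V "k - 1"] by (cases k) auto

lemma sc_sub: "strict_corners E S \<subseteq> S"
  unfolding strict_corners_def by auto

lemma sc_not_all:
  assumes "finite S" "S \<noteq> {}"
  shows "\<exists>v\<in>S. v \<notin> strict_corners E S"
proof -
  define F where "F = (\<lambda>u. card (cnbhd E S u))"
  have "Max (F ` S) \<in> F ` S" using assms by (intro Max_in) auto
  then obtain v where v1: "v \<in> S" "F v = Max (F ` S)" by auto
  have v: "v \<in> S" "\<forall>u\<in>S. card (cnbhd E S u) \<le> card (cnbhd E S v)"
  proof -
    have "\<forall>u\<in>S. F u \<le> F v" using v1 assms by (simp add: Max_ge)
    then show "\<forall>u\<in>S. card (cnbhd E S u) \<le> card (cnbhd E S v)" unfolding F_def .
  qed (fact v1)
  show ?thesis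
  proof (rule bexI[OF _ v(1)], rule notI)
    assume "v \<in> strict_corners E S"
    then obtain w where w: "w \<in> S" "cnbhd E S v \<subset> cnbhd E S w"
      unfolding strict_corners_def by auto
    have "finite (cnbhd E S w)" using assms(1) unfolding cnbhd_def by auto
    then have "card (cnbhd E S v) < card (cnbhd E S w)" using w(2) psubset_card_mono by blast
    with v(2) w(1) show False by fastforce
  qed
qed


lemma cr_props:
  assumes "cop_win V E"
  shows "corner_rank V E \<ge> 1" "is_clique E (layer E V (corner_rank V E))"
    "\<And>j. 1 \<le> j \<Longrightarrow> j < corner_rank V E \<Longrightarrow> \<not> is_clique E (layer E V j)"
proof -
  obtain k where k: "k \<ge> 1" "is_clique E (layer E V k)" using assms unfolding cop_win_def by auto
  have L: "corner_rank V E \<ge> 1 \<and> is_clique E (layer E V (corner_rank V E))"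
    unfolding corner_rank_def by (rule LeastI[of _ k]) (use k in auto)
  then show "corner_rank V E \<ge> 1" "is_clique E (layer E V (corner_rank V E))" by auto
  fix j assume "1 \<le> j" "j < corner_rank V E"
  then show "\<not> is_clique E (layer E V j)"
    unfolding corner_rank_def using not_less_Least by blast
qed

lemma rcv_char:
  assumes a1: "\<alpha> \<ge> 1" and cl: "is_clique E (layer E V \<alpha>)"
    and nc: "\<And>j. 1 \<le> j \<Longrightarrow> j < \<alpha> \<Longrightarrow> \<not> is_clique E (layer E V j)"
  shows "corner_rank V E = \<alpha>" "cop_win V E"
    "rank_set V E \<alpha> = layer E V \<alpha>"
    "rcv V E = card (layer E V \<alpha>) #
        map (\<lambda>k. card (strict_corners E (layer E V k))) (rev [1..<\<alpha>])"
proof -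
  show cr: "corner_rank V E = \<alpha>" unfolding corner_rank_def
  proof (rule Least_equality)
    show "1 \<le> \<alpha> \<and> is_clique E (layer E V \<alpha>)" using a1 cl by auto
    fix y assume "1 \<le> y \<and> is_clique E (layer E V y)"
    then show "\<alpha> \<le> y" using nc by (meson not_le)
  qed
  show "cop_win V E" unfolding cop_win_def using a1 cl by auto
  show rs: "rank_set V E \<alpha> = layer E V \<alpha>" unfolding rank_set_def using a1 cl nc by auto
  have rs2: "rank_set V E k = strict_corners E (layer E V k)" if "k \<in> set (rev [1..<\<alpha>])" for k
    using that nc unfolding rank_set_def by auto
  have "rev [1..<\<alpha> + 1] = \<alpha> # rev [1..<\<alpha>]" using a1 by simp
  then show "rcv V E = card (layer E V \<alpha>) #
        map (\<lambda>k. card (strict_corners E (layer E V k))) (rev [1..<\<alpha>])"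
    unfolding rcv_def cr using rs rs2 by simp
qed

lemma length_rcv: "length (rcv V E) = corner_rank V E"
  unfolding rcv_def by simp

lemma decomp:
  assumes g: "graph V E" and cw: "cop_win V E" and r2: "corner_rank V E \<ge> 2"
  defines "L \<equiv> layer E V (Suc (Suc 0))"
  shows "graph L E" "cop_win L E" "corner_rank L E = corner_rank V E - 1"
    "rcv V E = rcv L E @ [card (strict_corners E V)]"
    "L = V - strict_corners E V"
    "rank_set L E (corner_rank L E) = rank_set V E (corner_rank V E)"
proof -
  define \<alpha> where "\<alpha> = corner_rank V E"
  note P = cr_props[OF cw, folded \<alpha>_def]
  have LL: "layer E L k = layer E V (Suc k)" if "k \<ge> 1" for k
    unfolding L_def using layer_shift'[OF that] .
  show Ld: "L = V - strict_corners E V" unfolding L_def by simp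
  have fin: "finite V" "V \<noteq> {}" using g unfolding graph_def by auto
  obtain v where "v \<in> V" "v \<notin> strict_corners E V" using sc_not_all[OF fin] by blast
  then have "L \<noteq> {}" using Ld by auto
  then show "graph L E" using g unfolding graph_def Ld by auto
  have a1: "\<alpha> - 1 \<ge> 1" using r2 \<alpha>_def by simp
  have cl: "is_clique E (layer E L (\<alpha> - 1))" using LL[OF a1] P(2) r2 \<alpha>_def by simp
  have nc: "\<not> is_clique E (layer E L j)" if "1 \<le> j" "j < \<alpha> - 1" for j
    using LL[of j] P(3)[of "Suc j"] that by simp
  note C = rcv_char[OF a1 cl nc]
  show "cop_win L E" "corner_rank L E = corner_rank V E - 1" using C \<alpha>_def by auto
  have cl2: "is_clique E (layer E V \<alpha>)" using P by simp
  have nc2: "\<not> is_clique E (layer E V j)" if "1 \<le> j" "j < \<alpha>" for j using P(3) that by simp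
  note C2 = rcv_char[OF P(1) cl2 nc2]
  show "rank_set L E (corner_rank L E) = rank_set V E (corner_rank V E)"
    using C(1,3) C2(3) LL[OF a1] r2 \<alpha>_def by simp
  have e: "rev [1..<\<alpha>] = map Suc (rev [1..<\<alpha> - 1]) @ [1]"
  proof -
    have "[1..<\<alpha>] = 1 # map Suc [1..<\<alpha> - 1]" using r2 \<alpha>_def
      by (simp add: map_Suc_upt upt_conv_Cons)
    then show ?thesis by (simp add: rev_map)
  qed
  have m: "map (\<lambda>k. card (strict_corners E (layer E L k))) (rev [1..<\<alpha> - 1]) =
      map (\<lambda>k. card (strict_corners E (layer E V (Suc k)))) (rev [1..<\<alpha> - 1])"
    by (rule map_cong) (auto simp: LL)
  show "rcv V E = rcv L E @ [card (strict_corners E V)]"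
  proof -
    have "rcv V E = card (layer E V \<alpha>) #
        map (\<lambda>k. card (strict_corners E (layer E V k))) (rev [1..<\<alpha>])" using C2(4) .
    also have "\<dots> = (card (layer E L (\<alpha> - 1)) #
        map (\<lambda>k. card (strict_corners E (layer E L k))) (rev [1..<\<alpha> - 1]))
         @ [card (strict_corners E V)]"
      unfolding e m using LL[OF a1] r2 \<alpha>_def by simp
    also have "\<dots> = rcv L E @ [card (strict_corners E V)]" using C(4) by simp
    finally show ?thesis .
  qed
qed

lemma type0_decomp:
  assumes g: "graph V E" and t: "type0 V E" and r2: "corner_rank V E \<ge> 2"
  shows "type0 (layer E V (Suc (Suc 0))) E"
proof -
  define L where "L = layer E V (Suc (Suc 0))"
  have cw: "cop_win V E" using t unfolding type0_def by auto
  note D = decomp[OF g cw r2, folded L_def]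
  have LL: "layer E L k = layer E V (Suc k)" if "k \<ge> 1" for k
    unfolding L_def using layer_shift'[OF that] .
  have "\<not> type1 L E"
  proof
    assume "type1 L E"
    then obtain v where v: "corner_rank L E \<ge> 2" "v \<in> rank_set L E (corner_rank L E)"
      "dominates E v (layer E L (corner_rank L E - 1))" unfolding type1_def by auto
    have "layer E L (corner_rank L E - 1) = layer E V (Suc (corner_rank L E - 1))"
      using LL[of "corner_rank L E - 1"] v(1) by simp
    also have "Suc (corner_rank L E - 1) = corner_rank V E - 1" using D(3) v(1) by simp
    finally have "layer E L (corner_rank L E - 1) = layer E V (corner_rank V E - 1)" .
    then have "type1 V E" unfolding type1_def using cw r2 v D(6) by auto
    then show False using t unfolding type0_def by auto
  qed
  then show ?thesis unfolding type0_def L_def[symmetric] using D(2) by auto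
qed

lemma type0_dom:
  assumes g: "graph V E" and t: "type0 V E" and r2: "corner_rank V E = 2"
  shows "\<forall>v\<in>layer E V (Suc (Suc 0)). \<not> dominates E v V"
proof -
  have cw: "cop_win V E" using t unfolding type0_def by auto
  note P = cr_props[OF cw]
  have "rank_set V E 2 = layer E V 2"
    using rcv_char(3)[OF P(1) P(2) P(3)] r2 by simp
  then show ?thesis using t r2 unfolding type0_def type1_def
    by (auto simp: numeral_2_eq_2)
qed


lemma sc_path:
  assumes "b \<ge> a + 3"
  shows "strict_corners path_E {a..<b} = {a, b - 1}"
proof (intro equalityI subsetI)
  fix v assume v: "v \<in> strict_corners path_E {a..<b}"
  then obtain w where w: "w \<in> {a..<b}" "w \<noteq> v"
    "cnbhd path_E {a..<b} v \<subset> cnbhd path_E {a..<b} w" and vv: "v \<in> {a..<b}"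
    unfolding strict_corners_def by blast
  show "v \<in> {a, b - 1}"
  proof (rule ccontr)
    assume "v \<notin> {a, b - 1}"
    then have "v - 1 \<in> cnbhd path_E {a..<b} v" "v + 1 \<in> cnbhd path_E {a..<b} v"
      using vv unfolding cnbhd_def path_E_def by auto
    then have "path_E w (v - 1)" "path_E w (v + 1)" using w(3) unfolding cnbhd_def by auto
    then show False using w(2) \<open>v \<notin> {a, b - 1}\<close> vv unfolding path_E_def by auto
  qed
next
  fix v assume "v \<in> {a, b - 1}"
  then show "v \<in> strict_corners path_E {a..<b}"
  proof
    assume v: "v = a"
    have "cnbhd path_E {a..<b} a \<subset> cnbhd path_E {a..<b} (a + 1)"
    proof
      show "cnbhd path_E {a..<b} a \<subseteq> cnbhd path_E {a..<b} (a + 1)"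
        unfolding cnbhd_def path_E_def by auto
      have "a + 2 \<in> cnbhd path_E {a..<b} (a + 1)" "a + 2 \<notin> cnbhd path_E {a..<b} a"
        using assms unfolding cnbhd_def path_E_def by auto
      then show "cnbhd path_E {a..<b} a \<noteq> cnbhd path_E {a..<b} (a + 1)" by blast
    qed
    then show ?thesis unfolding strict_corners_def v using assms
      by (intro CollectI conjI bexI[of _ "a + 1"]) auto
  next
    assume "v \<in> {b - 1}"
    then have v: "v = b - 1" by simp
    have "cnbhd path_E {a..<b} (b - 1) \<subset> cnbhd path_E {a..<b} (b - 2)"
    proof
      show "cnbhd path_E {a..<b} (b - 1) \<subseteq> cnbhd path_E {a..<b} (b - 2)"
        using assms unfolding cnbhd_def path_E_def by auto
      have "b - 3 \<in> cnbhd path_E {a..<b} (b - 2)" "b - 3 \<notin> cnbhd path_E {a..<b} (b - 1)"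
        using assms unfolding cnbhd_def path_E_def by auto
      then show "cnbhd path_E {a..<b} (b - 1) \<noteq> cnbhd path_E {a..<b} (b - 2)" by blast
    qed
    then show ?thesis unfolding strict_corners_def v using assms
      by (intro CollectI conjI bexI[of _ "b - 2"]) auto
  qed
qed

lemma clique_path: "is_clique path_E {a..<b} \<longleftrightarrow> b \<le> a + 2"
proof
  assume c: "is_clique path_E {a..<b}"
  show "b \<le> a + 2"
  proof (rule ccontr)
    assume "\<not> b \<le> a + 2"
    then have "a \<in> {a..<b}" "a + 2 \<in> {a..<b}" by auto
    then show False using c unfolding is_clique_def path_E_def by fastforce
  qed
qed (auto simp: is_clique_def path_E_def)

lemma layer_path: "2 * k < n \<Longrightarrow> layer path_E {0..<n} (Suc k) = {k..<n - k}"
proof (induction k)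
  case 0 then show ?case by simp
next
  case (Suc k)
  then have "layer path_E {0..<n} (Suc (Suc k)) = {k..<n - k} - {k, n - k - 1}"
    using sc_path[of k "n - k"] by simp
  also have "\<dots> = {Suc k..<n - Suc k}" using Suc.prems by auto
  finally show ?case .
qed

lemma path_char:
  assumes a1: "\<alpha> \<ge> 1" and n: "n = 2 * \<alpha> - 1 \<or> n = 2 * \<alpha>"
  shows "corner_rank (path_V n) path_E = \<alpha>" "cop_win (path_V n) path_E"
    "rank_set (path_V n) path_E \<alpha> = {\<alpha> - 1..<n - (\<alpha> - 1)}"
    "rcv (path_V n) path_E = card {\<alpha> - 1..<n - (\<alpha> - 1)} # replicate (\<alpha> - 1) 2"
    "graph (path_V n) path_E"
proof -
  have L: "layer path_E (path_V n) k = {k - 1..<n - (k - 1)}" if "1 \<le> k" "k \<le> \<alpha>" for k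
    using layer_path[of "k - 1" n] that n unfolding path_V_def by (cases k) auto
  have cl: "is_clique path_E (layer path_E (path_V n) \<alpha>)"
    using L[of \<alpha>] a1 n clique_path by auto
  have nc: "\<not> is_clique path_E (layer path_E (path_V n) j)" if "1 \<le> j" "j < \<alpha>" for j
    using L[of j] that n clique_path by auto
  note C = rcv_char[OF a1 cl nc]
  show "corner_rank (path_V n) path_E = \<alpha>" "cop_win (path_V n) path_E" using C by auto
  show "rank_set (path_V n) path_E \<alpha> = {\<alpha> - 1..<n - (\<alpha> - 1)}" using C(3) L[of \<alpha>] a1 by simp
  have m: "map (\<lambda>k. card (strict_corners path_E (layer path_E (path_V n) k))) (rev [1..<\<alpha>])
     = map (\<lambda>k. 2) (rev [1..<\<alpha>])"
  proof (rule map_cong)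
    fix k assume "k \<in> set (rev [1..<\<alpha>])"
    then have k: "1 \<le> k" "k < \<alpha>" by auto
    then have "strict_corners path_E (layer path_E (path_V n) k) = {k - 1, n - (k - 1) - 1}"
      using L[of k] sc_path[of "k - 1" "n - (k - 1)"] n by auto
    then show "card (strict_corners path_E (layer path_E (path_V n) k)) = 2"
      using k n by auto
  qed simp
  show "rcv (path_V n) path_E = card {\<alpha> - 1..<n - (\<alpha> - 1)} # replicate (\<alpha> - 1) 2"
    using C(4) L[of \<alpha>] a1 unfolding m by (simp add: map_replicate_const)
  show "graph (path_V n) path_E" unfolding graph_def path_V_def path_E_def using n a1 by auto
qed

definition pathrep :: "('a \<Rightarrow> 'a \<Rightarrow> bool) \<Rightarrow> (nat \<Rightarrow> 'a) \<Rightarrow> nat \<Rightarrow> 'a set \<Rightarrow> bool" where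
  "pathrep E p n H \<longleftrightarrow> H = p ` {0..<n} \<and> inj_on p {0..<n} \<and>
     (\<forall>i<n. \<forall>j<n. E (p i) (p j) \<longleftrightarrow> path_E i j)"

lemma pr_in: "pathrep E p n H \<Longrightarrow> i < n \<Longrightarrow> p i \<in> H"
  unfolding pathrep_def by auto
lemma pr_inj: "pathrep E p n H \<Longrightarrow> i < n \<Longrightarrow> j < n \<Longrightarrow> p i = p j \<longleftrightarrow> i = j"
  unfolding pathrep_def inj_on_def by auto
lemma pr_E: "pathrep E p n H \<Longrightarrow> i < n \<Longrightarrow> j < n \<Longrightarrow> E (p i) (p j) \<longleftrightarrow> path_E i j"
  unfolding pathrep_def by auto
lemma pr_ex: "pathrep E p n H \<Longrightarrow> v \<in> H \<Longrightarrow> \<exists>i<n. v = p i"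
  unfolding pathrep_def by auto

lemma iso_rep: "graph_iso H E (path_V n) path_E \<longleftrightarrow> (\<exists>p. pathrep E p n H)"
proof
  assume "graph_iso H E (path_V n) path_E"
  then obtain f where f: "bij_betw f H {0..<n}" "\<forall>u\<in>H. \<forall>v\<in>H. E u v \<longleftrightarrow> path_E (f u) (f v)"
    unfolding graph_iso_def path_V_def by auto
  define p where "p = inv_into H f"
  have b: "bij_betw p {0..<n} H" unfolding p_def by (rule bij_betw_inv_into[OF f(1)])
  have fp: "f (p i) = i" if "i < n" for i
    unfolding p_def using f(1) that by (simp add: bij_betw_def f_inv_into_f)
  have "pathrep E p n H" unfolding pathrep_def
  proof (intro conjI allI impI)
    show "H = p ` {0..<n}" using b by (simp add: bij_betw_def)
    show "inj_on p {0..<n}" using b by (simp add: bij_betw_def)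
    fix i j assume "i < n" "j < n"
    then have "p i \<in> H" "p j \<in> H" using b by (auto simp: bij_betw_def)
    then show "E (p i) (p j) = path_E i j" using f(2) fp \<open>i < n\<close> \<open>j < n\<close> by auto
  qed
  then show "\<exists>p. pathrep E p n H" by blast
next
  assume "\<exists>p. pathrep E p n H"
  then obtain p where p: "pathrep E p n H" by blast
  have b: "bij_betw p {0..<n} H" using p unfolding pathrep_def bij_betw_def by auto
  define f where "f = inv_into {0..<n} p"
  have bf: "bij_betw f H {0..<n}" unfolding f_def by (rule bij_betw_inv_into[OF b])
  have pf: "p (f u) = u" "f u < n" if "u \<in> H" for u
    using that b bf unfolding f_def by (auto simp: bij_betw_def f_inv_into_f inv_into_into)
  show "graph_iso H E (path_V n) path_E" unfolding graph_iso_def path_V_def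
    using bf pf pr_E[OF p] by metis
qed

lemma pr_reflect:
  assumes "pathrep E p n H"
  shows "pathrep E (\<lambda>i. p (n - 1 - i)) n H"
  unfolding pathrep_def
proof (intro conjI allI impI)
  have "(\<lambda>i. n - 1 - i) ` {0..<n} = {0..<n}"
  proof
    show "{0..<n} \<subseteq> (\<lambda>i. n - 1 - i) ` {0..<n}"
    proof
      fix i assume "i \<in> {0..<n}"
      then show "i \<in> (\<lambda>i. n - 1 - i) ` {0..<n}" by (intro image_eqI[of _ _ "n - 1 - i"]) auto
    qed
  qed auto
  then have "(\<lambda>i. p (n - 1 - i)) ` {0..<n} = p ` {0..<n}" by (metis image_image)
  then show "H = (\<lambda>i. p (n - 1 - i)) ` {0..<n}" using assms unfolding pathrep_def by auto
  show "inj_on (\<lambda>i. p (n - 1 - i)) {0..<n}"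
    using pr_inj[OF assms] by (auto simp: inj_on_def)
  fix i j assume "i < n" "j < n"
  then show "E (p (n - 1 - i)) (p (n - 1 - j)) = path_E i j"
    using pr_E[OF assms, of "n - 1 - i" "n - 1 - j"] unfolding path_E_def by auto
qed

lemma gsym: "graph V E \<Longrightarrow> u \<in> V \<Longrightarrow> v \<in> V \<Longrightarrow> E u v = E v u"
  unfolding graph_def by auto
lemma grefl: "graph V E \<Longrightarrow> v \<in> V \<Longrightarrow> E v v"
  unfolding graph_def by auto
lemma cn_mem: "cnbhd E V a \<subseteq> cnbhd E V b \<Longrightarrow> u \<in> V \<Longrightarrow> E a u \<Longrightarrow> E b u"
  unfolding cnbhd_def by auto
lemma sc_obt: "z \<in> strict_corners E V \<Longrightarrow> \<exists>w\<in>V. w \<noteq> z \<and> cnbhd E V z \<subset> cnbhd E V w"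
  unfolding strict_corners_def by auto

lemma endpoint:
  assumes g: "graph V E" and pr: "pathrep E p n H" and V: "V = H \<union> {x, y}"
    and n3: "n \<ge> 3" and nc: "p 0 \<notin> strict_corners E V"
  shows "\<exists>z\<in>{x, y}. E (p 0) z \<and> \<not> E (p 1) z"
proof (rule ccontr)
  assume a: "\<not> ?thesis"
  have in0: "p 0 \<in> V" "p 1 \<in> V" "p 2 \<in> V" using pr_in[OF pr] n3 V by auto
  have ne: "p 1 \<noteq> p 0" using pr_inj[OF pr, of 1 0] n3 by auto
  have sub: "cnbhd E V (p 0) \<subseteq> cnbhd E V (p 1)"
  proof
    fix v assume v: "v \<in> cnbhd E V (p 0)"
    then have vV: "v \<in> V" and e: "E (p 0) v" unfolding cnbhd_def by auto
    show "v \<in> cnbhd E V (p 1)"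
    proof (cases "v \<in> H")
      case True
      then obtain i where i: "i < n" "v = p i" using pr_ex[OF pr] by blast
      then have "path_E 0 i" using e pr_E[OF pr, of 0 i] n3 by auto
      then have "path_E 1 i" unfolding path_E_def by auto
      then show ?thesis using pr_E[OF pr, of 1 i] i n3 vV unfolding cnbhd_def by auto
    next
      case False
      then have "v \<in> {x, y}" using vV V by auto
      then show ?thesis using a e vV unfolding cnbhd_def by auto
    qed
  qed
  have "p 2 \<in> cnbhd E V (p 1)" "p 2 \<notin> cnbhd E V (p 0)"
    using pr_E[OF pr, of 1 2] pr_E[OF pr, of 0 2] n3 in0 unfolding cnbhd_def path_E_def by auto
  then have "cnbhd E V (p 0) \<subset> cnbhd E V (p 1)" using sub by blast
  then have "p 0 \<in> strict_corners E V" unfolding strict_corners_def using in0 ne by blast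
  then show False using nc by simp
qed

lemma noH:
  assumes pr: "pathrep E p n H" and n3: "n \<ge> 3" and i: "i < n"
    and e: "E (p i) (p 0)" "E (p i) (p (n - 1))"
  shows "n = 3 \<and> i = 1"
  using pr_E[OF pr, of i 0] pr_E[OF pr, of i "n - 1"] n3 i e unfolding path_E_def by auto

lemma notH:
  assumes g: "graph V E" and pr: "pathrep E p n H" and V: "V = H \<union> {x, y}"
    and n3: "n \<ge> 3" and z: "z \<in> V" and w: "w \<in> V"
    and sub: "cnbhd E V z \<subseteq> cnbhd E V w"
    and e: "E z (p 0)" "E z (p (n - 1))" "\<not> E z (p (n - 2))"
  shows "w \<notin> H"
proof
  assume "w \<in> H"
  then obtain i where i: "i < n" "w = p i" using pr_ex[OF pr] by blast
  have in0: "p 0 \<in> V" "p (n - 1) \<in> V" "p (n - 2) \<in> V" using pr_in[OF pr] n3 V by auto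
  have "E w (p 0)" "E w (p (n - 1))" "E w z"
    using cn_mem[OF sub] in0 e z grefl[OF g z] by auto
  then have "n = 3 \<and> i = 1" using noH[OF pr n3 i(1)] i by auto
  then have "E (p (n - 2)) z" using \<open>E w z\<close> i by simp
  then show False using e(3) gsym[OF g] z in0 by blast
qed

lemma both_ends_False:
  assumes g: "graph V E" and pr: "pathrep E p n H" and V: "V = H \<union> {x, y}"
    and xy: "x \<notin> H" "y \<notin> H" and n3: "n \<ge> 3"
    and sx: "x \<in> strict_corners E V" and sy: "y \<in> strict_corners E V"
    and z: "z \<in> {x, y}"
    and e: "E (p 0) z" "E (p (n - 1)) z" "\<not> E (p (n - 2)) z"
  shows False
proof -
  have in0: "p 0 \<in> V" "p (n - 1) \<in> V" "p (n - 2) \<in> V" using pr_in[OF pr] n3 V by auto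
  have zV: "z \<in> V" using z V by auto
  have e': "E z (p 0)" "E z (p (n - 1))" "\<not> E z (p (n - 2))"
    using e gsym[OF g] in0 zV by auto
  have zs: "z \<in> strict_corners E V" using z sx sy by auto
  obtain w where w: "w \<in> V" "w \<noteq> z" "cnbhd E V z \<subset> cnbhd E V w" using sc_obt[OF zs] by blast
  have "w \<notin> H" using notH[OF g pr V n3 zV w(1) _ e'] w(3) by blast
  then have wxy: "w \<in> {x, y}" using w(1) V by auto
  then have ws: "w \<in> strict_corners E V" using sx sy by auto
  obtain w' where w': "w' \<in> V" "w' \<noteq> w" "cnbhd E V w \<subset> cnbhd E V w'" using sc_obt[OF ws] by blast
  have "cnbhd E V z \<subseteq> cnbhd E V w'" using w(3) w'(3) by blast
  then have "w' \<notin> H" using notH[OF g pr V n3 zV w'(1) _ e'] by blast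
  then have "w' = z" using w'(1,2) V wxy z w(2) by auto
  then show False using w(3) w'(3) by blast
qed

lemma half:
  assumes g: "graph V E" and pr: "pathrep E p n H" and V: "V = H \<union> {x, y}"
    and xy: "x \<notin> H" "y \<notin> H" and n3: "n \<ge> 3"
    and sx: "x \<in> strict_corners E V" and sy: "y \<in> strict_corners E V"
    and z: "z0 \<in> {x, y}" "z1 \<in> {x, y}" "z0 \<noteq> z1"
    and e: "E (p 0) z0" "\<not> E (p 1) z0" "E (p (n - 1)) z1" "\<not> E (p (n - 2)) z1"
  shows "cnbhd E V z0 \<subset> cnbhd E V (p 0)"
proof -
  have in0: "p 0 \<in> V" "p 1 \<in> V" "p (n - 1) \<in> V" "p (n - 2) \<in> V" using pr_in[OF pr] n3 V by auto
  have zV: "z0 \<in> V" "z1 \<in> V" using z V by auto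
  have zs: "z0 \<in> strict_corners E V" using z sx sy by auto
  obtain w where w: "w \<in> V" "w \<noteq> z0" "cnbhd E V z0 \<subset> cnbhd E V w" using sc_obt[OF zs] by blast
  have ew: "E w z0" "E w (p 0)" using cn_mem[of E V z0 w] w(3) zV in0 grefl[OF g] e(1) gsym[OF g]
    by auto
  show ?thesis
  proof (cases "w \<in> H")
    case True
    then obtain i where i: "i < n" "w = p i" using pr_ex[OF pr] by blast
    then have "path_E i 0" using pr_E[OF pr, of i 0] ew n3 by auto
    then have "i = 0 \<or> i = 1" unfolding path_E_def by auto
    then have "i = 0" using ew(1) i e(2) by auto
    then show ?thesis using w(3) i by simp
  next
    case False
    then have wz: "w = z1" using w(1,2) V z by auto
    have e1: "E z1 (p 0)" "E z1 (p (n - 1))" "\<not> E z1 (p (n - 2))"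
      using cn_mem[of E V z0 z1] w(3) wz in0 e gsym[OF g] zV by auto
    have z1s: "z1 \<in> strict_corners E V" using z sx sy by auto
    obtain w' where w': "w' \<in> V" "w' \<noteq> z1" "cnbhd E V z1 \<subset> cnbhd E V w'"
      using sc_obt[OF z1s] by blast
    have "w' \<notin> H" using notH[OF g pr V n3 zV(2) w'(1) _ e1] w'(3) by blast
    then have "w' = z0" using w'(1,2) V z by auto
    then have False using w(3) w'(3) wz by blast
    then show ?thesis ..
  qed
qed

lemma nbhd0:
  assumes g: "graph V E" and pr: "pathrep E p n H" and V: "V = H \<union> {x, y}"
    and n3: "n \<ge> 3"
    and z: "z0 \<in> {x, y}" "z1 \<in> {x, y}" "z0 \<noteq> z1"
    and e: "E (p 0) z0" "\<not> E (p 1) z0"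
    and s0: "cnbhd E V z0 \<subseteq> cnbhd E V (p 0)"
    and s1: "cnbhd E V z1 \<subseteq> cnbhd E V (p (n - 1))"
  shows "\<forall>v\<in>V. E z0 v \<longleftrightarrow> v = z0 \<or> v = p 0"
proof (intro ballI iffI)
  have in0: "p 0 \<in> V" "p 1 \<in> V" "p (n - 1) \<in> V" using pr_in[OF pr] n3 V by auto
  have zV: "z0 \<in> V" "z1 \<in> V" using z V by auto
  fix v assume vV: "v \<in> V"
  {
    assume ev: "E z0 v"
    then have ep: "E (p 0) v" using cn_mem[OF s0 vV] by blast
    show "v = z0 \<or> v = p 0"
    proof (cases "v \<in> H")
      case True
      then obtain i where i: "i < n" "v = p i" using pr_ex[OF pr] by blast
      then have "path_E 0 i" using pr_E[OF pr, of 0 i] ep n3 by auto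
      then have "i = 0 \<or> i = 1" unfolding path_E_def by auto
      moreover have "i \<noteq> 1" using ev i e(2) gsym[OF g] zV in0 by auto
      ultimately show ?thesis using i by auto
    next
      case False
      then have "v = z0 \<or> v = z1" using vV V z by auto
      moreover
      {
        assume "v = z1" "v \<noteq> z0"
        then have "E z1 z0" using ev gsym[OF g] zV by auto
        then have "E (p (n - 1)) z0" using cn_mem[OF s1] zV by blast
        then have "E (p 0) (p (n - 1))" using cn_mem[OF s0] in0 gsym[OF g] zV by blast
        then have False using pr_E[OF pr, of 0 "n - 1"] n3 unfolding path_E_def by auto
      }
      ultimately show ?thesis by blast
    qed
  }
  {
    assume "v = z0 \<or> v = p 0"
    then show "E z0 v" using grefl[OF g] zV e(1) gsym[OF g] in0 by auto
  }
qed

lemma extend2: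
  assumes g: "graph V E" and pr: "pathrep E p n H" and V: "V = H \<union> {z0, z1}"
    and zH: "z0 \<notin> H" "z1 \<notin> H" "z0 \<noteq> z1" and n1: "n \<ge> 1"
    and a0: "\<forall>v\<in>V. E z0 v \<longleftrightarrow> v = z0 \<or> v = p 0"
    and a1: "\<forall>v\<in>V. E z1 v \<longleftrightarrow> v = z1 \<or> v = p (n - 1)"
  shows "\<exists>q. pathrep E q (n + 2) V"
proof -
  define q where "q i = (if i = 0 then z0 else if i = n + 1 then z1 else p (i - 1))" for i
  have qV: "q i \<in> V" if "i < n + 2" for i
    using that pr_in[OF pr, of "i - 1"] V unfolding q_def by auto
  have qinj: "q i = q j \<longleftrightarrow> i = j" if "i < n + 2" "j < n + 2" for i j
  proof -
    have pz: "p k \<noteq> z0 \<and> p k \<noteq> z1" if "k < n" for k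
      using pr_in[OF pr, of k] zH that by auto
    have "i - 1 < n" if "0 < i" "i < n + 1" for i using that by linarith
    then show ?thesis using that zH pr_inj[OF pr, of "i - 1" "j - 1"] pz[of "i - 1"] pz[of "j - 1"]
      unfolding q_def by (auto split: if_splits)
  qed
  have q0: "q 0 = z0" "q 1 = p 0" "q (n + 1) = z1" "q n = p (n - 1)"
    using n1 unfolding q_def by auto
  have E0: "E z0 (q j) \<longleftrightarrow> path_E 0 j" if "j < n + 2" for j
  proof -
    have "E z0 (q j) \<longleftrightarrow> q j = q 0 \<or> q j = q 1" using a0 qV[OF that] q0 by auto
    also have "\<dots> \<longleftrightarrow> j = 0 \<or> j = 1" using qinj[OF that, of 0] qinj[OF that, of 1] by auto
    finally show ?thesis unfolding path_E_def by auto
  qed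
  have E1: "E z1 (q j) \<longleftrightarrow> path_E (n + 1) j" if "j < n + 2" for j
  proof -
    have "E z1 (q j) \<longleftrightarrow> q j = q (n + 1) \<or> q j = q n" using a1 qV[OF that] q0 by auto
    also have "\<dots> \<longleftrightarrow> j = n + 1 \<or> j = n"
      using qinj[OF that, of "n + 1"] qinj[OF that, of n] by auto
    finally show ?thesis unfolding path_E_def using that by auto
  qed
  have "pathrep E q (n + 2) V" unfolding pathrep_def
  proof (intro conjI allI impI)
    show "inj_on q {0..<n + 2}" using qinj by (auto simp: inj_on_def)
    show "V = q ` {0..<n + 2}"
    proof
      show "q ` {0..<n + 2} \<subseteq> V" using qV by auto
      show "V \<subseteq> q ` {0..<n + 2}"
      proof
        fix v assume "v \<in> V"
        then consider "v = z0" | "v = z1" | "v \<in> H" using V by auto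
        then show "v \<in> q ` {0..<n + 2}"
        proof cases
          case 1 then show ?thesis using q0 by (intro image_eqI[of _ _ 0]) auto
        next
          case 2 then show ?thesis using q0 by (intro image_eqI[of _ _ "n + 1"]) auto
        next
          case 3
          then obtain i where "i < n" "v = p i" using pr_ex[OF pr] by blast
          then show ?thesis unfolding q_def by (intro image_eqI[of _ _ "i + 1"]) auto
        qed
      qed
    qed
    fix i j assume ij: "i < n + 2" "j < n + 2"
    consider "i = 0" | "i = n + 1" | "j = 0" | "j = n + 1" | "0 < i \<and> i < n + 1 \<and> 0 < j \<and> j < n + 1"
      using ij by linarith
    then show "E (q i) (q j) = path_E i j"
    proof cases
      case 1 then show ?thesis using E0[OF ij(2)] q0 by simp
    next
      case 2 then show ?thesis using E1[OF ij(2)] q0 by simp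
    next
      case 3 then show ?thesis using E0[OF ij(1)] q0 gsym[OF g] qV ij
        unfolding path_E_def by auto
    next
      case 4 then show ?thesis using E1[OF ij(1)] q0 gsym[OF g] qV ij
        unfolding path_E_def by auto
    next
      case 5
      then have "q i = p (i - 1)" "q j = p (j - 1)" unfolding q_def by auto
      moreover have "i - 1 < n" "j - 1 < n" using 5 by linarith+
      ultimately show ?thesis using pr_E[OF pr, of "i - 1" "j - 1"] 5 unfolding path_E_def by auto
    qed
  qed
  then show ?thesis by blast
qed

lemma step2:
  assumes g: "graph V E" and pr: "pathrep E p n H" and V: "V = H \<union> {x, y}"
    and xy: "x \<notin> H" "y \<notin> H" and n3: "n \<ge> 3"
    and sx: "x \<in> strict_corners E V" and sy: "y \<in> strict_corners E V"
    and nc0: "p 0 \<notin> strict_corners E V" and nc1: "p (n - 1) \<notin> strict_corners E V"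
  shows "\<exists>q. pathrep E q (n + 2) V"
proof -
  define r where "r i = p (n - 1 - i)" for i
  have prr: "pathrep E r n H" unfolding r_def by (rule pr_reflect[OF pr])
  have r0: "r 0 = p (n - 1)" "r 1 = p (n - 2)" "r (n - 1) = p 0" "r (n - 2) = p 1"
    unfolding r_def using n3 by (auto simp: numeral_2_eq_2)
  obtain z0 where z0: "z0 \<in> {x, y}" "E (p 0) z0" "\<not> E (p 1) z0"
    using endpoint[OF g pr V n3 nc0] by blast
  obtain z1 where z1: "z1 \<in> {x, y}" "E (p (n - 1)) z1" "\<not> E (p (n - 2)) z1"
    using endpoint[OF g prr V n3] nc1 r0 by auto
  have ne: "z0 \<noteq> z1"
  proof
    assume "z0 = z1"
    then show False using both_ends_False[OF g pr V xy n3 sx sy z0(1) z0(2)] z1 by auto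
  qed
  have h0: "cnbhd E V z0 \<subset> cnbhd E V (p 0)"
    using half[OF g pr V xy n3 sx sy z0(1) z1(1) ne z0(2,3) z1(2,3)] .
  have h1: "cnbhd E V z1 \<subset> cnbhd E V (p (n - 1))"
    using half[OF g prr V xy n3 sx sy z1(1) z0(1) ne[symmetric]] z1(2,3) z0(2,3) r0 by auto
  have a0: "\<forall>v\<in>V. E z0 v \<longleftrightarrow> v = z0 \<or> v = p 0"
    using nbhd0[OF g pr V n3 z0(1) z1(1) ne z0(2,3)] h0 h1 by auto
  have a1: "\<forall>v\<in>V. E z1 v \<longleftrightarrow> v = z1 \<or> v = p (n - 1)"
    using nbhd0[OF g prr V n3 z1(1) z0(1) ne[symmetric]] h0 h1 z1(2,3) r0 by auto
  have V': "V = H \<union> {z0, z1}" using V z0(1) z1(1) ne by auto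
  show ?thesis using extend2[OF g pr V' _ _ ne _ a0 a1] z0(1) z1(1) xy n3 by auto
qed

lemma single_False:
  assumes g: "graph V E" and pr: "pathrep E p n H" and V: "V = H \<union> {x}"
    and xH: "x \<notin> H" and n3: "n \<ge> 3"
    and sx: "x \<in> strict_corners E V"
    and nc0: "p 0 \<notin> strict_corners E V" and nc1: "p (n - 1) \<notin> strict_corners E V"
  shows False
proof -
  have V': "V = H \<union> {x, x}" using V by simp
  define r where "r i = p (n - 1 - i)" for i
  have prr: "pathrep E r n H" unfolding r_def by (rule pr_reflect[OF pr])
  have r0: "r 0 = p (n - 1)" "r 1 = p (n - 2)"
    unfolding r_def using n3 by (auto simp: numeral_2_eq_2)
  have "E (p (n - 1)) x" "\<not> E (p (n - 2)) x"
    using endpoint[OF g prr V' n3] nc1 r0 by auto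
  moreover have "E (p 0) x" using endpoint[OF g pr V' n3 nc0] by auto
  ultimately show False using both_ends_False[OF g pr V' xH xH n3 sx sx, of x] by auto
qed

lemma corner_adj:
  assumes g: "graph V E" and z: "z \<in> strict_corners E V"
  shows "\<exists>w\<in>V. w \<noteq> z \<and> E w z \<and> (\<forall>u\<in>V. E z u \<longrightarrow> E w u) \<and> \<not> (\<forall>u\<in>V. E w u \<longrightarrow> E z u)"
proof -
  obtain w where w: "w \<in> V" "w \<noteq> z" "cnbhd E V z \<subset> cnbhd E V w" using sc_obt[OF z] by blast
  have zV: "z \<in> V" using subsetD[OF sc_sub z] .
  have sub: "cnbhd E V z \<subseteq> cnbhd E V w" using w(3) by (rule psubset_imp_subset)
  have "E w z" by (rule cn_mem[OF sub zV grefl[OF g zV]])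
  moreover have "\<forall>u\<in>V. E z u \<longrightarrow> E w u" using cn_mem[OF sub] by blast
  moreover have "\<not> (\<forall>u\<in>V. E w u \<longrightarrow> E z u)"
  proof
    assume "\<forall>u\<in>V. E w u \<longrightarrow> E z u"
    then have "cnbhd E V w \<subseteq> cnbhd E V z" unfolding cnbhd_def by blast
    then show False using w(3) by blast
  qed
  ultimately show ?thesis using w(1,2) by (intro bexI[of _ w]) simp_all
qed

lemma small1:
  assumes g: "graph V E" and V: "V = {a, x, y}" and d: "a \<noteq> x" "a \<noteq> y" "x \<noteq> y"
    and sx: "x \<in> strict_corners E V" and sy: "y \<in> strict_corners E V"
    and ncl: "\<not> is_clique E V"
  shows "\<exists>q. pathrep E q 3 V"
proof -
  have S: "E u v = E v u" if "u \<in> V" "v \<in> V" for u v using gsym[OF g] that by blast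
  have R: "E a a" "E x x" "E y y" using grefl[OF g] V by auto
  obtain w1 where w1: "w1 \<in> V" "w1 \<noteq> x" "E w1 x" "\<forall>u\<in>V. E x u \<longrightarrow> E w1 u"
      "\<not> (\<forall>u\<in>V. E w1 u \<longrightarrow> E x u)" using corner_adj[OF g sx] by blast
  obtain w2 where w2: "w2 \<in> V" "w2 \<noteq> y" "E w2 y" "\<forall>u\<in>V. E y u \<longrightarrow> E w2 u"
      "\<not> (\<forall>u\<in>V. E w2 u \<longrightarrow> E y u)" using corner_adj[OF g sy] by blast
  have Sxy: "E y x = E x y" "E a x = E x a" "E a y = E y a"
    using S[of y x] S[of a x] S[of a y] V by auto
  have nc: "\<not> (E x y \<and> E x a \<and> E y a)"
    using ncl Sxy R unfolding is_clique_def V by auto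
  have w1c: "w1 = a \<or> w1 = y" using w1(1,2) V by auto
  have w2c: "w2 = a \<or> w2 = x" using w2(1,2) V by auto
  have xyV: "x \<in> V" "y \<in> V" using V by auto
  have nxy: "\<not> E x y"
  proof
    assume exy: "E x y"
    have "E w1 y" using w1(4) exy xyV by blast
    then have "w1 = y" using w1c w1(3) nc Sxy exy by auto
    have "E w2 x" using w2(4) exy Sxy xyV by auto
    then have "w2 = x" using w2c w2(3) nc Sxy exy by auto
    show False using w1(4) w2(5) \<open>w1 = y\<close> \<open>w2 = x\<close> by blast
  qed
  have "w1 = a" using w1c w1(3) nxy Sxy by auto
  have "w2 = a" using w2c w2(3) nxy Sxy by auto
  have "\<not> E x y \<and> E x a \<and> E y a" using nxy w1(3) w2(3) \<open>w1 = a\<close> \<open>w2 = a\<close> Sxy by auto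
  then have a0: "\<forall>v\<in>V. E x v \<longleftrightarrow> v = x \<or> v = a" and a1: "\<forall>v\<in>V. E y v \<longleftrightarrow> v = y \<or> v = a"
    using Sxy R d unfolding V by auto
  have pr: "pathrep E (\<lambda>_. a) 1 {a}" unfolding pathrep_def using R path_E_def by auto
  have "\<exists>q. pathrep E q (1 + 2) V"
    by (rule extend2[OF g pr _ _ _ d(3) _ a0]) (use V d a1 in auto)
  then show ?thesis by (simp add: eval_nat_numeral)
qed

lemma small2:
  assumes g: "graph V E" and V: "V = {a, b, x, y}"
    and d: "a \<noteq> b" "a \<noteq> x" "a \<noteq> y" "b \<noteq> x" "b \<noteq> y" "x \<noteq> y" and eab: "E a b"
    and sx: "x \<in> strict_corners E V" and sy: "y \<in> strict_corners E V"
    and da: "\<not> dominates E a V" and db: "\<not> dominates E b V"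
  shows "\<exists>q. pathrep E q 4 V"
proof -
  have S: "E u v = E v u" if "u \<in> V" "v \<in> V" for u v using gsym[OF g] that by blast
  have R: "E a a" "E x x" "E y y" "E b b" using grefl[OF g] V by auto
  obtain w1 where w1: "w1 \<in> V" "w1 \<noteq> x" "E w1 x" "\<forall>u\<in>V. E x u \<longrightarrow> E w1 u"
      "\<not> (\<forall>u\<in>V. E w1 u \<longrightarrow> E x u)" using corner_adj[OF g sx] by blast
  obtain w2 where w2: "w2 \<in> V" "w2 \<noteq> y" "E w2 y" "\<forall>u\<in>V. E y u \<longrightarrow> E w2 u"
      "\<not> (\<forall>u\<in>V. E w2 u \<longrightarrow> E y u)" using corner_adj[OF g sy] by blast
  have eba: "E b a" using S[of b a] eab V by auto
  have da': "\<not> (E a x \<and> E a y)" "\<not> (E b x \<and> E b y)"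
    using da db R eab eba unfolding dominates_def V by auto
  have Sxy: "E y x = E x y" "E a x = E x a" "E b x = E x b" "E a y = E y a" "E b y = E y b"
    using S[of y x] S[of a x] S[of b x] S[of a y] S[of b y] V by auto
  have w1c: "w1 = a \<or> w1 = b \<or> w1 = y" using w1(1,2) V by auto
  have w2c: "w2 = a \<or> w2 = b \<or> w2 = x" using w2(1,2) V by auto
  have nxy: "\<not> E x y"
  proof
    assume exy: "E x y"
    have yV: "y \<in> V" "x \<in> V" using V by auto
    have "E w1 y" using w1(4) exy yV by blast
    then have "w1 = y" using w1c w1(3) da' Sxy by auto
    have "E w2 x" using w2(4) exy Sxy yV by auto
    then have "w2 = x" using w2c w2(3) da' Sxy by auto
    show False using w1(4) w2(5) \<open>w1 = y\<close> \<open>w2 = x\<close> by blast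
  qed
  have w1ab: "w1 = a \<or> w1 = b" using w1c w1(3) nxy Sxy by auto
  have w2ab: "w2 = a \<or> w2 = b" using w2c w2(3) nxy Sxy by auto
  have xa: "E x a \<or> E x b" using w1ab w1(3) Sxy by auto
  have ya: "E y a \<or> E y b" using w2ab w2(3) Sxy by auto
  have key: "\<not> E x y \<and> ((E x a \<and> \<not> E x b \<and> E y b \<and> \<not> E y a) \<or>
                          (E x b \<and> \<not> E x a \<and> E y a \<and> \<not> E y b))"
    using nxy xa ya da' Sxy by blast
  define p where "p i = (if i = 0 then a else b)" for i :: nat
  have pr: "pathrep E p 2 {a, b}" unfolding pathrep_def p_def
    using R eab eba d unfolding path_E_def inj_on_def by (auto simp: less_2_cases_iff image_iff)
  show ?thesis
  proof (cases "E x a")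
    case True
    then have a0: "\<forall>v\<in>V. E x v \<longleftrightarrow> v = x \<or> v = p 0" and a1: "\<forall>v\<in>V. E y v \<longleftrightarrow> v = y \<or> v = p (2 - 1)"
      using key Sxy R d unfolding V p_def by auto
    have "\<exists>q. pathrep E q (2 + 2) V"
      by (rule extend2[OF g pr _ _ _ d(6) _ a0 a1]) (use V d in auto)
    then show ?thesis by (simp add: eval_nat_numeral)
  next
    case False
    then have a0: "\<forall>v\<in>V. E y v \<longleftrightarrow> v = y \<or> v = p 0" and a1: "\<forall>v\<in>V. E x v \<longleftrightarrow> v = x \<or> v = p (2 - 1)"
      using key Sxy R d unfolding V p_def by auto
    have "\<exists>q. pathrep E q (2 + 2) V"
      by (rule extend2[OF g pr _ _ _ d(6)[symmetric] _ a0 a1]) (use V d in auto)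
    then show ?thesis by (simp add: eval_nat_numeral)
  qed
qed

lemma small2_single:
  assumes g: "graph V E" and V: "V = {a, b, x}"
    and sx: "x \<in> strict_corners E V"
    and da: "\<not> dominates E a V" and db: "\<not> dominates E b V" and eab: "E a b"
  shows False
proof -
  have S: "E u v = E v u" if "u \<in> V" "v \<in> V" for u v using gsym[OF g] that by blast
  have R: "E a a" "E x x" "E b b" using grefl[OF g] V by auto
  obtain w1 where w1: "w1 \<in> V" "w1 \<noteq> x" "E w1 x" using corner_adj[OF g sx] by blast
  have "E b a" using S[of b a] eab V by auto
  then have "\<not> E a x" "\<not> E b x" using da db R eab unfolding dominates_def V by auto
  then show False using w1 V by auto
qed

lemma rcv_cw:
  assumes "cop_win V E"
  shows "rcv V E = card (layer E V (corner_rank V E)) #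
        map (\<lambda>k. card (strict_corners E (layer E V k))) (rev [1..<corner_rank V E])"
  using rcv_char(4)[OF cr_props[OF assms]] .

lemma rank1:
  assumes "cop_win V E" "corner_rank V E = 1"
  shows "rcv V E = [card V]" "is_clique E V"
  using rcv_cw[OF assms(1)] cr_props(2)[OF assms(1)] assms(2) by auto

lemma odd_unique:
  "\<alpha> \<ge> 1 \<Longrightarrow> graph V E \<Longrightarrow> cop_win V E \<Longrightarrow> rcv V E = 1 # replicate (\<alpha> - 1) 2 \<Longrightarrow>
   \<exists>p. pathrep E p (2 * \<alpha> - 1) V"
proof (induction \<alpha> arbitrary: V)
  case 0 then show ?case by simp
next
  case (Suc a)
  note g = Suc.prems(2) and cw = Suc.prems(3) and r = Suc.prems(4)
  have cr: "corner_rank V E = Suc a" using length_rcv[of V E] r by simp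
  show ?case
  proof (cases "a = 0")
    case True
    then have "card V = 1" using rank1[OF cw] cr r by simp
    then obtain v where V: "V = {v}" by (auto simp: card_1_singleton_iff)
    have "pathrep E (\<lambda>_. v) 1 V" unfolding pathrep_def V path_E_def
      using grefl[OF g] V by auto
    then show ?thesis using True by auto
  next
    case False
    define L where "L = layer E V (Suc (Suc 0))"
    have r2: "corner_rank V E \<ge> 2" using cr False by simp
    note D = decomp[OF g cw r2, folded L_def]
    have "rcv L E @ [card (strict_corners E V)] = (1 # replicate (a - 1) 2) @ [2]"
      using D(4) r False by (cases a) (auto simp: replicate_append_same)
    then have rL: "rcv L E = 1 # replicate (a - 1) 2" and c2: "card (strict_corners E V) = 2"
      by auto
    obtain p where pr: "pathrep E p (2 * a - 1) L" using Suc.IH[OF _ D(1) D(2) rL] False by auto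
    obtain x y where xy: "strict_corners E V = {x, y}" "x \<noteq> y" using c2 card_2_iff by metis
    have scV: "strict_corners E V \<subseteq> V" by (rule sc_sub)
    have V: "V = L \<union> {x, y}" using D(5) xy scV by auto
    have xyL: "x \<notin> L" "y \<notin> L" using D(5) xy by auto
    have sx: "x \<in> strict_corners E V" "y \<in> strict_corners E V" using xy by auto
    show ?thesis
    proof (cases "a = 1")
      case True
      then have L: "L = {p 0}" using pr unfolding pathrep_def by auto
      have V': "V = {p 0, x, y}" using V L by auto
      have ncl: "\<not> is_clique E V" using cr_props(3)[OF cw, of 1] r2 by simp
      have "\<exists>q. pathrep E q 3 V"
        by (rule small1[OF g V' _ _ xy(2) sx ncl]) (use xyL L in auto)
      then show ?thesis using True by (simp add: eval_nat_numeral)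
    next
      case False
      then have n3: "2 * a - 1 \<ge> 3" using \<open>a \<noteq> 0\<close> by simp
      have nc: "p 0 \<notin> strict_corners E V" "p (2 * a - 1 - 1) \<notin> strict_corners E V"
        using pr_in[OF pr, of 0] pr_in[OF pr, of "2 * a - 1 - 1"] n3 D(5) by auto
      obtain q where "pathrep E q (2 * a - 1 + 2) V"
        using step2[OF g pr V xyL n3 sx nc] by blast
      moreover have "2 * a - 1 + 2 = 2 * Suc a - 1" using n3 by simp
      ultimately show ?thesis by auto
    qed
  qed
qed

lemma even_unique:
  "\<alpha> \<ge> 1 \<Longrightarrow> graph V E \<Longrightarrow> type0 V E \<Longrightarrow> rcv V E = replicate \<alpha> 2 \<Longrightarrow>
   \<exists>p. pathrep E p (2 * \<alpha>) V"
proof (induction \<alpha> arbitrary: V)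
  case 0 then show ?case by simp
next
  case (Suc a)
  note g = Suc.prems(2) and t0 = Suc.prems(3) and r = Suc.prems(4)
  have cw: "cop_win V E" using t0 unfolding type0_def by auto
  have cr: "corner_rank V E = Suc a" using length_rcv[of V E] r by simp
  show ?case
  proof (cases "a = 0")
    case True
    then have c: "card V = 2" and cl: "is_clique E V" using rank1[OF cw] cr r by auto
    then obtain u v where V: "V = {u, v}" "u \<noteq> v" using card_2_iff by metis
    have "E u v" using cl V unfolding is_clique_def by auto
    moreover have "E v u" using cl V unfolding is_clique_def by auto
    ultimately have "pathrep E (\<lambda>i. if i = 0 then u else v) 2 V"
      unfolding pathrep_def path_E_def inj_on_def
      using grefl[OF g] V by (auto simp: less_2_cases_iff image_iff)
    then show ?thesis using True by auto
  next
    case False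
    define L where "L = layer E V (Suc (Suc 0))"
    have r2: "corner_rank V E \<ge> 2" using cr False by simp
    note D = decomp[OF g cw r2, folded L_def]
    have tL: "type0 L E" using type0_decomp[OF g t0 r2] unfolding L_def .
    have "rcv L E @ [card (strict_corners E V)] = replicate a 2 @ [2]"
      using D(4) r by (simp add: replicate_append_same)
    then have rL: "rcv L E = replicate a 2" and c2: "card (strict_corners E V) = 2"
      by auto
    obtain p where pr: "pathrep E p (2 * a) L" using Suc.IH[OF _ D(1) tL rL] False by auto
    obtain x y where xy: "strict_corners E V = {x, y}" "x \<noteq> y" using c2 card_2_iff by metis
    have scV: "strict_corners E V \<subseteq> V" by (rule sc_sub)
    have V: "V = L \<union> {x, y}" using D(5) xy scV by auto
    have xyL: "x \<notin> L" "y \<notin> L" using D(5) xy by auto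
    have sx: "x \<in> strict_corners E V" "y \<in> strict_corners E V" using xy by auto
    show ?thesis
    proof (cases "a = 1")
      case True
      have L: "L = {p 0, p 1}" using pr True unfolding pathrep_def
        by (auto simp: less_2_cases_iff image_iff)
      have d: "p 0 \<noteq> p 1" using pr_inj[OF pr, of 0 1] True by auto
      have e: "E (p 0) (p 1)" using pr_E[OF pr, of 0 1] True unfolding path_E_def by auto
      have V': "V = {p 0, p 1, x, y}" using V L by auto
      have dom: "\<forall>v\<in>L. \<not> dominates E v V" using type0_dom[OF g t0] cr True unfolding L_def by simp
      have "\<exists>q. pathrep E q 4 V"
        by (rule small2[OF g V' d _ _ _ _ xy(2) e sx]) (use xyL L dom in auto)
      then show ?thesis using True by (simp add: eval_nat_numeral)
    next
      case False
      then have n3: "2 * a \<ge> 3" using \<open>a \<noteq> 0\<close> by simp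
      have nc: "p 0 \<notin> strict_corners E V" "p (2 * a - 1) \<notin> strict_corners E V"
        using pr_in[OF pr, of 0] pr_in[OF pr, of "2 * a - 1"] n3 D(5) by auto
      obtain q where "pathrep E q (2 * a + 2) V"
        using step2[OF g pr V xyL n3 sx nc] by blast
      then show ?thesis by auto
    qed
  qed
qed

lemma part2:
  assumes m: "m \<ge> 1" shows "\<not> realizable ([1] @ replicate m 2 @ [1])"
proof
  assume "realizable ([1] @ replicate m 2 @ [1])"
  then obtain V :: "nat set" and E where g: "graph V E" and cw: "cop_win V E"
    and r: "rcv V E = [1] @ replicate m 2 @ [1]" unfolding realizable_def by auto
  have cr: "corner_rank V E = m + 2" using length_rcv[of V E] r by simp
  then have r2: "corner_rank V E \<ge> 2" by simp
  define L where "L = layer E V (Suc (Suc 0))"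
  note D = decomp[OF g cw r2, folded L_def]
  have "rcv L E @ [card (strict_corners E V)] = (1 # replicate m 2) @ [1]"
    using D(4) r by (metis append_Cons append_Nil)
  then have "rcv L E = 1 # replicate m 2 \<and> card (strict_corners E V) = 1"
    by (simp only: append1_eq_conv)
  then have rL: "rcv L E = 1 # replicate (m + 1 - 1) 2" and c1: "card (strict_corners E V) = 1"
    by simp_all
  have "\<exists>p. pathrep E p (2 * (m + 1) - 1) L" by (rule odd_unique[OF _ D(1) D(2) rL]) simp
  then obtain p where pr: "pathrep E p (2 * (m + 1) - 1) L" by blast
  have "\<exists>x. strict_corners E V = {x}" using c1 by (simp add: card_1_singleton_iff)
  then obtain x where x: "strict_corners E V = {x}" by blast
  have scV: "strict_corners E V \<subseteq> V" by (rule sc_sub)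
  have V: "V = L \<union> {x}" using D(5) x scV by auto
  have xL: "x \<notin> L" using D(5) x by auto
  have n3: "2 * (m + 1) - 1 \<ge> 3" using m by simp
  have nc: "p 0 \<notin> strict_corners E V" "p (2 * (m + 1) - 1 - 1) \<notin> strict_corners E V"
    using pr_in[OF pr, of 0] pr_in[OF pr, of "2 * (m + 1) - 1 - 1"] n3 D(5) by auto
  show False using single_False[OF g pr V xL n3 _ nc] x by auto
qed

lemma part4:
  assumes m: "m \<ge> 1" shows "\<not> zero_realizable (replicate m 2 @ [1])"
proof
  assume "zero_realizable (replicate m 2 @ [1])"
  then obtain V :: "nat set" and E where g: "graph V E" and t0: "type0 V E"
    and r: "rcv V E = replicate m 2 @ [1]" unfolding zero_realizable_def by auto
  have cw: "cop_win V E" using t0 unfolding type0_def by auto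
  have cr: "corner_rank V E = m + 1" using length_rcv[of V E] r by simp
  then have r2: "corner_rank V E \<ge> 2" using m by simp
  define L where "L = layer E V (Suc (Suc 0))"
  note D = decomp[OF g cw r2, folded L_def]
  have tL: "type0 L E" using type0_decomp[OF g t0 r2] unfolding L_def .
  have "rcv L E @ [card (strict_corners E V)] = replicate m 2 @ [1]"
    using D(4) r by simp
  then have "rcv L E = replicate m 2 \<and> card (strict_corners E V) = 1"
    by (simp only: append1_eq_conv)
  then have rL: "rcv L E = replicate m 2" and c1: "card (strict_corners E V) = 1"
    by simp_all
  have "\<exists>p. pathrep E p (2 * m) L" by (rule even_unique[OF m D(1) tL rL])
  then obtain p where pr: "pathrep E p (2 * m) L" by blast
  have "\<exists>x. strict_corners E V = {x}" using c1 by (simp add: card_1_singleton_iff)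
  then obtain x where x: "strict_corners E V = {x}" by blast
  have scV: "strict_corners E V \<subseteq> V" by (rule sc_sub)
  have V: "V = L \<union> {x}" using D(5) x scV by auto
  have xL: "x \<notin> L" using D(5) x by auto
  have sx: "x \<in> strict_corners E V" using x by auto
  show False
  proof (cases "m = 1")
    case True
    have L: "L = {p 0, p 1}" using pr True unfolding pathrep_def
      by (auto simp: less_2_cases_iff image_iff)
    have e: "E (p 0) (p 1)" using pr_E[OF pr, of 0 1] True unfolding path_E_def by auto
    have V': "V = {p 0, p 1, x}" using V L by auto
    have dom: "\<forall>v\<in>L. \<not> dominates E v V" using type0_dom[OF g t0] cr True unfolding L_def by simp
    show False using small2_single[OF g V' sx _ _ e] dom L by auto
  next
    case False
    then have n3: "2 * m \<ge> 3" using m by simp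
    have nc: "p 0 \<notin> strict_corners E V" "p (2 * m - 1) \<notin> strict_corners E V"
      using pr_in[OF pr, of 0] pr_in[OF pr, of "2 * m - 1"] n3 D(5) by auto
    show False using single_False[OF g pr V xL n3 sx nc] .
  qed
qed

lemma even_type0:
  assumes a1: "\<alpha> \<ge> 1"
  shows "type0 (path_V (2 * \<alpha>)) path_E"
proof -
  note P = path_char[OF a1, of "2 * \<alpha>"]
  have "\<not> type1 (path_V (2 * \<alpha>)) path_E"
  proof
    assume t: "type1 (path_V (2 * \<alpha>)) path_E"
    then have a2: "\<alpha> \<ge> 2" using P(1) unfolding type1_def by simp
    obtain v where v: "v \<in> {\<alpha> - 1..<2 * \<alpha> - (\<alpha> - 1)}"
      "dominates path_E v (layer path_E (path_V (2 * \<alpha>)) (\<alpha> - 1))"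
      using t P(1,3) unfolding type1_def by auto
    have "layer path_E (path_V (2 * \<alpha>)) (Suc (\<alpha> - 2)) = {\<alpha> - 2..<2 * \<alpha> - (\<alpha> - 2)}"
      unfolding path_V_def using a2 by (intro layer_path) simp
    moreover have "Suc (\<alpha> - 2) = \<alpha> - 1" using a2 by simp
    ultimately have l: "layer path_E (path_V (2 * \<alpha>)) (\<alpha> - 1) = {\<alpha> - 2..<\<alpha> + 2}" using a2 by simp
    have "v = \<alpha> - 1 \<or> v = \<alpha>" using v(1) a2 by auto
    then show False
    proof
      assume "v = \<alpha> - 1"
      then have "path_E v (\<alpha> + 1)" using v(2) l a2 unfolding dominates_def by auto
      then show False using \<open>v = \<alpha> - 1\<close> a2 unfolding path_E_def by auto
    next
      assume "v = \<alpha>"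
      then have "path_E v (\<alpha> - 2)" using v(2) l a2 unfolding dominates_def by auto
      then show False using \<open>v = \<alpha>\<close> a2 unfolding path_E_def by auto
    qed
  qed
  then show ?thesis unfolding type0_def using P(2) by auto
qed

theorem theorem3p22:
  fixes \<alpha> :: nat
  assumes "\<alpha> \<ge> 1"
  shows
    "((graph (path_V (2*\<alpha>-1)) path_E \<and> cop_win (path_V (2*\<alpha>-1)) path_E \<and>
        rcv (path_V (2*\<alpha>-1)) path_E = 1 # replicate (\<alpha>-1) 2) \<and>
     (\<forall>(V::'a set) E. graph V E \<and> cop_win V E \<and> rcv V E = 1 # replicate (\<alpha>-1) 2 \<longrightarrow>
        graph_iso V E (path_V (2*\<alpha>-1)) path_E)) \<and>
     (\<forall>m\<ge>1. \<not> realizable ([1] @ replicate m 2 @ [1])) \<and>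
     ((graph (path_V (2*\<alpha>)) path_E \<and> type0 (path_V (2*\<alpha>)) path_E \<and>
        rcv (path_V (2*\<alpha>)) path_E = replicate \<alpha> 2) \<and>
     (\<forall>(V::'b set) E. graph V E \<and> type0 V E \<and> rcv V E = replicate \<alpha> 2 \<longrightarrow>
        graph_iso V E (path_V (2*\<alpha>)) path_E)) \<and>
     (\<forall>m\<ge>1. \<not> zero_realizable (replicate m 2 @ [1]))"
proof -
  have n1: "2 * \<alpha> - 1 = 2 * \<alpha> - 1 \<or> 2 * \<alpha> - 1 = 2 * \<alpha>" by simp
  have n2: "2 * \<alpha> = 2 * \<alpha> - 1 \<or> 2 * \<alpha> = 2 * \<alpha>" by simp
  note P1 = path_char[OF assms n1]
  note P2 = path_char[OF assms n2]
  have c1: "card {\<alpha> - 1..<2 * \<alpha> - 1 - (\<alpha> - 1)} = 1"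
  proof -
    have "2 * \<alpha> - 1 - (\<alpha> - 1) = \<alpha>" using assms by simp
    then show ?thesis using assms by simp
  qed
  have c2: "card {\<alpha> - 1..<2 * \<alpha> - (\<alpha> - 1)} = 2"
  proof -
    have "2 * \<alpha> - (\<alpha> - 1) = \<alpha> + 1" using assms by simp
    then show ?thesis using assms by simp
  qed
  have i1: "\<forall>(V::'a set) E. graph V E \<and> cop_win V E \<and> rcv V E = 1 # replicate (\<alpha>-1) 2 \<longrightarrow>
        graph_iso V E (path_V (2*\<alpha>-1)) path_E"
  proof (intro allI impI)
    fix V :: "'a set" and E
    assume h: "graph V E \<and> cop_win V E \<and> rcv V E = 1 # replicate (\<alpha>-1) 2"
    obtain p where "pathrep E p (2 * \<alpha> - 1) V"
      using odd_unique[OF assms, of V E] h by blast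
    then show "graph_iso V E (path_V (2*\<alpha>-1)) path_E" by (rule iso_rep[THEN iffD2, OF exI])
  qed
  have i3: "\<forall>(V::'b set) E. graph V E \<and> type0 V E \<and> rcv V E = replicate \<alpha> 2 \<longrightarrow>
        graph_iso V E (path_V (2*\<alpha>)) path_E"
  proof (intro allI impI)
    fix V :: "'b set" and E
    assume h: "graph V E \<and> type0 V E \<and> rcv V E = replicate \<alpha> 2"
    obtain p where "pathrep E p (2 * \<alpha>) V"
      using even_unique[OF assms, of V E] h by blast
    then show "graph_iso V E (path_V (2*\<alpha>)) path_E" by (rule iso_rep[THEN iffD2, OF exI])
  qed
  have r1: "rcv (path_V (2 * \<alpha> - 1)) path_E = 1 # replicate (\<alpha> - 1) 2" using P1(4) c1 by simp
  have r2: "rcv (path_V (2 * \<alpha>)) path_E = replicate \<alpha> 2"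
    using P2(4) c2 assms by (cases \<alpha>) auto
  show ?thesis
    apply (intro conjI)
    subgoal by (rule P1(5))
    subgoal by (rule P1(2))
    subgoal by (rule r1)
    subgoal by (rule i1)
    subgoal using part2 by blast
    subgoal by (rule P2(5))
    subgoal by (rule even_type0[OF assms])
    subgoal by (rule r2)
    subgoal by (rule i3)
    subgoal using part4 by blast
    done
qed

end
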